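(* Let $\alpha\ge 0$ and $p>1$ be constants, and let $n$ be an integer with \[ n\ge 2+\frac{2(\alpha+2)}{p+1}\left(p+\sqrt{p^2+p}\right). \] Then the solution curve of the MEMS problem \[ u''+\frac{n-1}{r}u'+\lambda\frac{r^{\alpha}}{(1-u)^p}=0 \quad (0<r<1),\qquad u'(0)=0,\quad u(1)=0, \] admits at most two turns. That is, with $w$ and $\lambda(t)$ as in the context, $\lambda'(t)$ changes sign at most twice on $(0,\infty)$.
   Context: Here $\lambda>0$ is a parameter, and solutions are required to satisfy $0<u(r)<1$. Let $w(t)$ be the solution of \[ w''+\frac{n-1}{t}w'=\frac{t^{\alpha}}{w^p},\qquad w(0)=1,\quad w'(0)=0 \qquad (t>0). \] This solution is positive and increasing and is defined for all $t>0$. For each $t>0$, the function $u(r)=1-w(tr)/w(t)$ solves the problem with $\lambda=\lambda(t):=t^{\alpha+2}/w(t)^{p+1}$, and all solutions arise this way. The solution curve is \[ t\mapsto(\lambda,u(0))=\bigl(t^{\alpha+2}/w(t)^{p+1},\,1-1/w(t)\bigr), \qquad t\in(0,\infty). \] A turn of the curve is a change of sign of $\lambda'(t)$. *)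

theory Defs
  imports "HOL-Analysis.Analysis"
begin

text \<open>The parametrisation lambda(t) = t^(alpha+2) / w(t)^(p+1) of the solution curve.\<close>
definition mems_lambda :: "(real \<Rightarrow> real) \<Rightarrow> real \<Rightarrow> real \<Rightarrow> real \<Rightarrow> real" where
  "mems_lambda w \<alpha> p t = t powr (\<alpha> + 2) / (w t) powr (p + 1)"

definition at_most_two_sign_changes :: "(real \<Rightarrow> real) \<Rightarrow> real set \<Rightarrow> bool" where
  "at_most_two_sign_changes f S \<longleftrightarrow>
     \<not> (\<exists>t1 t2 t3 t4. t1 \<in> S \<and> t2 \<in> S \<and> t3 \<in> S \<and> t4 \<in> S \<and>
          t1 < t2 \<and> t2 < t3 \<and> t3 < t4 \<and>
          f t1 * f t2 < 0 \<and> f t2 * f t3 < 0 \<and> f t3 * f t4 < 0)"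

end

theory Submission
  imports Defs
begin


lemma last_zero:
  fixes f :: "real \<Rightarrow> real"
  assumes xy: "x \<le> y" and cont: "continuous_on {x..y} f" and fx: "f x \<le> 0" and fy: "f y > 0"
  shows "\<exists>c. x \<le> c \<and> c < y \<and> f c = 0 \<and> (\<forall>s. c < s \<and> s \<le> y \<longrightarrow> f s > 0)"
proof -
  let ?K = "{x..y} \<inter> f -` {..0}"
  have "closed ?K" using cont by (intro continuous_closed_preimage) auto
  hence "compact ?K" by (simp add: compact_eq_bounded_closed bounded_Int)
  moreover have "?K \<noteq> {}" using xy fx by auto
  ultimately obtain c where c: "c \<in> ?K" and cmax: "\<forall>t\<in>?K. t \<le> c"
    using compact_attains_sup by blast
  have cy: "c < y" using c fy by (cases "c = y") auto
  have pos: "f s > 0" if "c < s" "s \<le> y" for s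
  proof (rule ccontr)
    assume "\<not> f s > 0"
    hence "s \<in> ?K" using that c by auto
    hence "s \<le> c" using cmax by blast
    thus False using that by auto
  qed
  have "f c = 0"
  proof (rule ccontr)
    assume "f c \<noteq> 0"
    hence "f c < 0" using c by auto
    have "continuous_on {c..y} f" using cont c by (auto elim: continuous_on_subset)
    then obtain s where s: "c \<le> s" "s \<le> y" "f s = 0"
      using IVT'[of f c 0 y] \<open>f c < 0\<close> fy cy by auto
    hence "s \<noteq> c" using \<open>f c < 0\<close> by auto
    hence "c < s" using s by auto
    hence "f s > 0" using pos[of s] s(2) by blast
    thus False using s by auto
  qed
  thus ?thesis using c cy pos by auto
qed

lemma first_zero:
  fixes f :: "real \<Rightarrow> real"
  assumes xy: "x \<le> y" and cont: "continuous_on {x..y} f" and fx: "f x > 0" and fy: "f y \<le> 0"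
  shows "\<exists>c. x < c \<and> c \<le> y \<and> f c = 0 \<and> (\<forall>s. x \<le> s \<and> s < c \<longrightarrow> f s > 0)"
proof -
  let ?K = "{x..y} \<inter> f -` {..0}"
  have "closed ?K" using cont by (intro continuous_closed_preimage) auto
  hence "compact ?K" by (simp add: compact_eq_bounded_closed bounded_Int)
  moreover have "?K \<noteq> {}" using xy fy by auto
  ultimately obtain c where c: "c \<in> ?K" and cmin: "\<forall>t\<in>?K. c \<le> t"
    using compact_attains_inf by blast
  have cx: "x < c" using c fx by (cases "c = x") auto
  have pos: "f s > 0" if "x \<le> s" "s < c" for s
  proof (rule ccontr)
    assume "\<not> f s > 0"
    hence "s \<in> ?K" using that c by auto
    hence "c \<le> s" using cmin by blast
    thus False using that by auto
  qed
  have "f c = 0"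
  proof (rule ccontr)
    assume "f c \<noteq> 0"
    hence "f c < 0" using c by auto
    have "continuous_on {x..c} f" using cont c by (auto elim: continuous_on_subset)
    then obtain s where s: "x \<le> s" "s \<le> c" "f s = 0"
      using IVT2'[of f c 0 x] \<open>f c < 0\<close> fx cx by auto
    hence "s \<noteq> c" using \<open>f c < 0\<close> by auto
    hence "s < c" using s by auto
    hence "f s > 0" using pos[of s] s(1) by blast
    thus False using s by auto
  qed
  thus ?thesis using c cx pos by auto
qed

lemma deriv_sign_right:
  fixes f :: "real \<Rightarrow> real"
  assumes "DERIV f c :> D" "f c = 0" "\<delta> > 0" "\<And>s. c < s \<Longrightarrow> s < c + \<delta> \<Longrightarrow> f s > 0"
  shows "D \<ge> 0"
proof (rule ccontr)
  assume "\<not> D \<ge> 0"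
  then obtain d where d: "d > 0" "\<forall>h>0. h < d \<longrightarrow> f c > f (c + h)"
    using DERIV_neg_dec_right[OF assms(1)] by auto
  let ?h = "min d \<delta> / 2"
  have "f c > f (c + ?h)" using d assms(3) by auto
  moreover have "f (c + ?h) > 0" using assms(3,4) d by auto
  ultimately show False using assms(2) by auto
qed

lemma deriv_sign_left:
  fixes f :: "real \<Rightarrow> real"
  assumes "DERIV f c :> D" "f c = 0" "\<delta> > 0" "\<And>s. c - \<delta> < s \<Longrightarrow> s < c \<Longrightarrow> f s > 0"
  shows "D \<le> 0"
proof (rule ccontr)
  assume "\<not> D \<le> 0"
  then obtain d where d: "d > 0" "\<forall>h>0. h < d \<longrightarrow> f (c - h) < f c"
    using DERIV_pos_inc_left[OF assms(1)] by auto
  let ?h = "min d \<delta> / 2"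
  have "f c > f (c - ?h)" using d assms(3) by auto
  moreover have "f (c - ?h) > 0" using assms(3,4) d by auto
  ultimately show False using assms(2) by auto
qed

lemma lip_powr_neg:
  fixes x y m p :: real
  assumes "m > 0" "x \<ge> m" "y \<ge> m" "p > 0"
  shows "\<bar>x powr (-p) - y powr (-p)\<bar> \<le> p * m powr (-p-1) * \<bar>x - y\<bar>"
proof -
  have main: "\<bar>a powr (-p) - b powr (-p)\<bar> \<le> p * m powr (-p-1) * \<bar>a - b\<bar>" if ab: "m \<le> a" "a < b" for a b
  proof -
    have der: "DERIV (\<lambda>z. z powr (-p)) z :> (-p) * z powr (-p - 1)" if "z > 0" for z
      using has_real_derivative_powr[OF that, of "-p"] by simp
    obtain l z where z: "a < z" "z < b" "DERIV (\<lambda>z. z powr (-p)) z :> l"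
        "b powr (-p) - a powr (-p) = (b - a) * l"
    proof -
      have "continuous_on {a..b} (\<lambda>z. z powr (-p))"
        using ab assms(1) by (intro continuous_on_powr') (auto intro: continuous_intros)
      moreover have "(\<lambda>z. z powr (-p)) differentiable (at z)" if "a < z" for z
        using der[of z] that ab assms(1) real_differentiable_def by force
      ultimately show ?thesis using MVT[of a b "\<lambda>z. z powr (-p)"] ab that by blast
    qed
    have "l = (-p) * z powr (-p - 1)" using DERIV_unique[OF z(3) der] z ab assms by auto
    moreover have "z powr (-p-1) \<le> m powr (-p-1)"
      using z ab assms by (intro powr_mono2') auto
    ultimately have "\<bar>l\<bar> \<le> p * m powr (-p-1)" using assms by (simp add: abs_mult)
    hence "\<bar>(b - a) * l\<bar> \<le> (b-a) * (p * m powr (-p-1))" using ab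
      by (simp add: abs_mult mult_left_mono)
    moreover have "\<bar>a powr (-p) - b powr (-p)\<bar> = \<bar>(b - a) * l\<bar>" using z(4) by (simp add: abs_minus_commute)
    ultimately show ?thesis using ab by (simp add: mult.commute)
  qed
  show ?thesis
  proof (cases "x = y")
    case False
    then show ?thesis using main[of x y] main[of y x] assms
      by (cases "x < y") (auto simp: abs_minus_commute)
  qed simp
qed



locale mems =
  fixes \<alpha> p :: real and n :: nat and w w' w'' :: "real \<Rightarrow> real"
  assumes alpha: "\<alpha> \<ge> 0" and p: "p > 1"
    and n: "real n \<ge> 2 + 2 * (\<alpha> + 2) / (p + 1) * (p + sqrt (p^2 + p))"
    and w_pos: "\<And>t. t \<ge> 0 \<Longrightarrow> w t > 0"
    and w_deriv: "\<And>t. t \<ge> 0 \<Longrightarrow> (w has_real_derivative w' t) (at t within {0..})"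
    and w'_deriv: "\<And>t. t > 0 \<Longrightarrow> (w' has_real_derivative w'' t) (at t)"
    and w_ode: "\<And>t. t > 0 \<Longrightarrow> w'' t + (real n - 1) / t * w' t = t powr \<alpha> / (w t) powr p"
    and w0: "w 0 = 1" and w'0: "w' 0 = 0"
begin

definition "\<beta> = (\<alpha>+2)/(p+1)"
definition "kk = (real n - 2)/2"
definition "bb = \<beta>*(\<beta> + 2*kk)"
definition "vs = bb powr (-1/(p+1))"
definition "S t = vs * t powr \<beta>"
definition "A t = w t - S t"
definition "Q t = \<beta> * w t - t * w' t"
definition "H t = kk * w t + t * w' t - (kk+\<beta>) * S t"
definition "Y t = t powr kk * H t"
definition "F t = t powr (\<alpha>+2) * w t powr (-p)"
definition "G t = kk^2 * w t + F t - (kk+\<beta>)^2 * S t"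

lemma beta_pos: "\<beta> > 0" using alpha p by (simp add: \<beta>_def)
lemma beta_p: "\<beta> * (p+1) = \<alpha> + 2" using p by (simp add: \<beta>_def)

lemma kk_ge: "kk \<ge> \<beta> * (p + sqrt (p^2+p))"
  using n by (simp add: kk_def \<beta>_def field_simps)

lemma sqrt_pos: "sqrt (p^2+p) \<ge> 0" using p by (smt (verit) real_sqrt_ge_zero zero_le_power2)

lemma kk_pos: "kk > 0"
proof -
  have "\<beta> * (p + sqrt (p^2+p)) > 0" using beta_pos p sqrt_pos by (intro mult_pos_pos) linarith+
  thus ?thesis using kk_ge by linarith
qed

lemma bb_pos: "bb > 0" using beta_pos kk_pos by (simp add: bb_def)

lemma key_ineq: "kk^2 \<ge> p * bb"
proof -
  have s2: "(sqrt (p^2+p))^2 = p^2 + p" using p by simp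
  have "kk - p*\<beta> \<ge> \<beta> * sqrt (p^2+p)" using kk_ge by (simp add: algebra_simps)
  moreover have "\<beta> * sqrt (p^2+p) \<ge> 0" using beta_pos sqrt_pos by simp
  ultimately have "(kk - p*\<beta>)^2 \<ge> (\<beta> * sqrt (p^2+p))^2"
    by (intro power_mono) auto
  hence "(kk - p*\<beta>)^2 \<ge> \<beta>^2 * (p^2+p)" using s2 by (simp add: power_mult_distrib)
  thus ?thesis by (simp add: bb_def power2_eq_square algebra_simps)
qed

lemma vs_pos: "vs > 0" using bb_pos by (simp add: vs_def)

lemma vs_pow: "vs powr (p+1) = 1 / bb"
proof -
  have "vs powr (p+1) = bb powr (-1/(p+1) * (p+1))" using bb_pos by (simp add: vs_def powr_powr)
  also have "\<dots> = bb powr (-1)" using p by simp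
  finally show ?thesis using bb_pos by (simp add: powr_minus_divide)
qed

lemma S_pos: "t > 0 \<Longrightarrow> S t > 0" using vs_pos by (simp add: S_def)

lemma S_pow: assumes "t > 0" shows "t powr (\<alpha>+2) = bb * S t powr (p+1)"
proof -
  have "S t powr (p+1) = vs powr (p+1) * (t powr \<beta>) powr (p+1)"
    using vs_pos assms by (simp add: S_def powr_mult)
  also have "(t powr \<beta>) powr (p+1) = t powr (\<alpha>+2)" using beta_p by (simp add: powr_powr)
  finally show ?thesis using vs_pow bb_pos by simp
qed

lemma S_id: assumes "t > 0" shows "t powr (\<alpha>+2) * S t powr (-p) = bb * S t"
proof -
  have "S t powr (p+1) * S t powr (-p) = S t"
    using S_pos[OF assms] by (simp add: powr_add[symmetric])
  thus ?thesis using S_pow[OF assms] by (simp add: mult.assoc)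
qed

lemma F_ratio: assumes "t > 0" shows "F t = bb * S t * (w t / S t) powr (-p)"
proof -
  have wp: "w t > 0" using w_pos assms by simp
  have "w t = S t * (w t / S t)" using S_pos[OF assms] by simp
  hence "w t powr (-p) = S t powr (-p) * (w t / S t) powr (-p)"
    by (metis S_pos[OF assms] wp divide_pos_pos less_eq_real_def powr_mult)
  thus ?thesis using S_id[OF assms] by (simp add: F_def mult.assoc[symmetric])
qed

lemma dw: "t > 0 \<Longrightarrow> (w has_real_derivative w' t) (at t)"
  using w_deriv[of t] at_within_interior[of t "{0..}"] by simp

lemma dS: assumes "t > 0" shows "(S has_real_derivative \<beta> * S t / t) (at t)"
proof -
  have "(S has_real_derivative vs * (\<beta> * t powr (\<beta> - 1))) (at t)"
    unfolding S_def[abs_def] using has_real_derivative_powr[OF assms, of \<beta>]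
    by (intro DERIV_cmult) auto
  moreover have "vs * (\<beta> * t powr (\<beta> - 1)) = \<beta> * S t / t"
    using assms by (simp add: S_def powr_diff)
  ultimately show ?thesis by simp
qed

lemma dA: assumes "t > 0" shows "(A has_real_derivative w' t - \<beta> * S t / t) (at t)"
  unfolding A_def[abs_def] using dw[OF assms] dS[OF assms] by (intro DERIV_diff)

lemma tdA: assumes "t > 0" shows "t * (w' t - \<beta> * S t / t) = \<beta> * A t - Q t"
  using assms by (simp add: A_def Q_def field_simps)

lemma ode2: assumes "t > 0" shows "t * (t * w'' t) = F t - (real n - 1) * (t * w' t)"
proof -
  have wp: "w t > 0" using w_pos assms by simp
  have "t * (w'' t + (real n - 1) / t * w' t) = t * (t powr \<alpha> / (w t) powr p)"
    using w_ode[OF assms] by simp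
  moreover have "t * ((real n - 1) / t * w' t) = (real n - 1) * w' t" using assms by simp
  ultimately have e1: "t * w'' t + (real n - 1) * w' t = t * (t powr \<alpha> / (w t) powr p)"
    by (simp add: distrib_left)
  have "t * (t * w'' t + (real n - 1) * w' t) = t * (t * (t powr \<alpha> / (w t) powr p))"
    using e1 by simp
  hence e2: "t * (t * w'' t) = t * (t * (t powr \<alpha> / (w t) powr p)) - (real n - 1) * (t * w' t)"
    by (simp add: algebra_simps)
  have "t * (t * (t powr \<alpha> / (w t) powr p)) = F t"
    using assms wp by (simp add: F_def powr_add powr_minus divide_inverse mult.assoc power2_eq_square)
  thus ?thesis using e2 by simp
qed

lemma dQ: assumes "t > 0" shows "(Q has_real_derivative (\<beta> - 1) * w' t - t * w'' t) (at t)"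
proof -
  have "(Q has_real_derivative \<beta> * w' t - (1 * w' t + t * w'' t)) (at t)"
    unfolding Q_def[abs_def] using dw[OF assms] w'_deriv[OF assms]
  proof (intro DERIV_diff DERIV_cmult)
    show "((\<lambda>x. x * w' x) has_real_derivative 1 * w' t + t * w'' t) (at t)"
      using DERIV_mult[OF DERIV_ident w'_deriv[OF assms]] by (simp add: mult.commute)
  qed (use dw[OF assms] in auto)
  thus ?thesis by (simp add: algebra_simps)
qed

lemma tdQ: assumes "t > 0"
  shows "t * ((\<beta> - 1) * w' t - t * w'' t) = bb * w t - (\<beta> + real n - 2) * Q t - F t"
proof -
  have "t * ((\<beta> - 1) * w' t - t * w'' t) = (\<beta> - 1) * (t * w' t) - t * (t * w'' t)"
    by (simp add: algebra_simps)
  also have "\<dots> = (\<beta> + real n - 2) * (t * w' t) - F t" using ode2[OF assms] by (simp add: algebra_simps)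
  also have "t * w' t = \<beta> * w t - Q t" by (simp add: Q_def)
  finally have "t * ((\<beta> - 1) * w' t - t * w'' t) = (\<beta> + real n - 2) * (\<beta> * w t - Q t) - F t" .
  moreover have bbe: "bb = \<beta> * (\<beta> + real n - 2)" by (simp add: bb_def kk_def field_simps)
  ultimately show ?thesis unfolding bbe by (simp add: algebra_simps)
qed

lemma bern: assumes "r > 0" shows "r powr (-p) \<ge> 1 - p * (r - 1)"
proof -
  have "r powr (-p) = exp (-p * ln r)" using assms by (simp add: powr_def)
  also have "\<dots> \<ge> 1 + (-p * ln r)" by (rule exp_ge_add_one_self)
  finally have "r powr (-p) \<ge> 1 - p * ln r" by simp
  moreover have "p * ln r \<le> p * (r - 1)" using ln_le_minus_one[OF assms] p by (intro mult_left_mono) auto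
  ultimately show ?thesis by linarith
qed

lemma dH: assumes "t > 0"
  shows "(H has_real_derivative kk * w' t + (w' t + t * w'' t) - (kk+\<beta>) * (\<beta> * S t / t)) (at t)"
proof -
  have "((\<lambda>x. x * w' x) has_real_derivative 1 * w' t + t * w'' t) (at t)"
    using DERIV_mult[OF DERIV_ident w'_deriv[OF assms]] by (simp add: mult.commute)
  thus ?thesis unfolding H_def[abs_def] using dw[OF assms] dS[OF assms]
    by (intro DERIV_diff DERIV_add DERIV_cmult) auto
qed

lemma dY: assumes "t > 0" shows "(Y has_real_derivative t powr (kk - 1) * G t) (at t)"
proof -
  let ?H' = "kk * w' t + (w' t + t * w'' t) - (kk+\<beta>) * (\<beta> * S t / t)"
  have d: "(Y has_real_derivative kk * t powr (kk - 1) * H t + t powr kk * ?H') (at t)"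
    unfolding Y_def[abs_def] using DERIV_mult[OF has_real_derivative_powr[OF assms, of kk] dH[OF assms]]
    by (simp add: mult.commute mult.left_commute)
  have tk: "t powr kk = t powr (kk - 1) * t" using assms by (simp add: powr_diff)
  have "kk * H t + t * ?H' = kk^2 * w t + (2*kk+1) * (t * w' t) + t * (t * w'' t) - (kk+\<beta>)^2 * S t"
    using assms by (simp add: H_def field_simps power2_eq_square)
  also have "\<dots> = G t"
  proof -
    have "2*kk+1 = real n - 1" by (simp add: kk_def field_simps)
    thus ?thesis using ode2[OF assms] by (simp add: G_def)
  qed
  finally have eq: "kk * H t + t * ?H' = G t" .
  have "kk * t powr (kk - 1) * H t + t powr kk * ?H' = t powr (kk - 1) * (kk * H t + t * ?H')"
    unfolding tk by (simp only: algebra_simps)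
  hence "kk * t powr (kk - 1) * H t + t powr kk * ?H' = t powr (kk - 1) * G t"
    unfolding eq .
  thus ?thesis using d by simp
qed

lemma bb_sq: "(kk+\<beta>)^2 = kk^2 + bb" by (simp add: bb_def power2_eq_square algebra_simps)

lemma G_nonneg: assumes "t > 0" "A t \<ge> 0" shows "G t \<ge> 0"
proof -
  define r where "r = w t / S t"
  have Sp: "S t > 0" using S_pos assms by simp
  have wr: "w t = S t * r" using Sp by (simp add: r_def)
  have r1: "r \<ge> 1" using assms Sp by (simp add: r_def A_def)
  have "F t = bb * S t * r powr (-p)" using F_ratio[OF assms(1)] by (simp add: r_def)
  moreover have "r powr (-p) \<ge> 1 - p * (r - 1)" using bern r1 by simp
  ultimately have "F t \<ge> bb * S t * (1 - p * (r - 1))" using bb_pos Sp by simp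
  hence "G t \<ge> kk^2 * (S t * r) + bb * S t * (1 - p * (r - 1)) - (kk^2 + bb) * S t"
    using bb_sq by (simp add: G_def wr)
  moreover have "kk^2 * (S t * r) + bb * S t * (1 - p * (r - 1)) - (kk^2 + bb) * S t
      = S t * ((kk^2 - p * bb) * (r - 1))" by (simp add: algebra_simps)
  moreover have "S t * ((kk^2 - p * bb) * (r - 1)) \<ge> 0" using Sp key_ineq r1 by simp
  ultimately show ?thesis by linarith
qed

lemma Qzero_sign:
  assumes "t > 0" "Q t = 0"
  shows "A t > 0 \<Longrightarrow> bb * w t - F t > 0" and "A t < 0 \<Longrightarrow> bb * w t - F t < 0"
proof -
  define r where "r = w t / S t"
  have Sp: "S t > 0" using S_pos assms by simp
  have wp: "w t > 0" using w_pos assms by simp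
  have rp: "r > 0" using Sp wp by (simp add: r_def)
  have wr: "w t = S t * r" using Sp by (simp add: r_def)
  have e: "bb * w t - F t = bb * S t * (r - r powr (-p))"
    using F_ratio[OF assms(1)] by (simp add: r_def[symmetric] wr algebra_simps)
  show "bb * w t - F t > 0" if "A t > 0"
  proof -
    have "r > 1" using that Sp by (simp add: r_def A_def)
    hence "r powr (-p) < 1 powr (-p)" using p by (intro powr_less_mono2_neg) auto
    hence "r - r powr (-p) > 0" using \<open>r > 1\<close> by simp
    thus ?thesis unfolding e using bb_pos Sp by simp
  qed
  show "bb * w t - F t < 0" if "A t < 0"
  proof -
    have "r < 1" using that Sp by (simp add: r_def A_def)
    hence "1 powr (-p) < r powr (-p)" using p rp by (intro powr_less_mono2_neg) auto
    hence "r - r powr (-p) < 0" using \<open>r < 1\<close> by simp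
    thus ?thesis unfolding e using bb_pos Sp by (simp add: mult_pos_neg)
  qed
qed

lemma contw: "t > 0 \<Longrightarrow> isCont w t" using dw DERIV_isCont by blast
lemma contS: "t > 0 \<Longrightarrow> isCont S t" using dS DERIV_isCont by blast

lemma w_lim: "(w \<longlongrightarrow> 1) (at_right 0)"
proof -
  have "continuous (at 0 within {0..}) w" using DERIV_continuous[OF w_deriv[of 0]] by simp
  hence "(w \<longlongrightarrow> 1) (at 0 within {0..})" using w0 by (simp add: continuous_within)
  thus ?thesis by (rule tendsto_within_subset) auto
qed

lemma S_lim: "(S \<longlongrightarrow> 0) (at_right 0)"
proof -
  have "((\<lambda>t. t powr \<beta>) \<longlongrightarrow> 0) (at_right 0)"
    using beta_pos eventually_at_right_less[of "0::real"]
    by (intro tendsto_zero_powrI tendsto_ident_at tendsto_const) (auto elim: eventually_mono)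
  hence "((\<lambda>t. vs * t powr \<beta>) \<longlongrightarrow> vs * 0) (at_right 0)" by (intro tendsto_mult tendsto_const)
  thus ?thesis by (simp add: S_def[abs_def])
qed

lemma bound_alg:
  fixes a q R b bb cc K :: real
  assumes "b \<ge> 0" "bb \<ge> 0" "K \<ge> 0" "\<bar>R\<bar> \<le> K * \<bar>a\<bar>"
  shows "\<bar>2*a*(b*a - q) + 2*q*(bb*a - cc*q + R)\<bar> \<le> 2*(b + \<bar>cc\<bar> + 1 + bb + K)*(a^2+q^2)"
proof -
  have h1: "\<bar>a\<bar>*\<bar>q\<bar> \<le> a^2+q^2"
  proof -
    have "0 \<le> (\<bar>a\<bar> - \<bar>q\<bar>)^2" by simp
    hence "2*(\<bar>a\<bar>*\<bar>q\<bar>) \<le> a^2 + q^2" by (simp add: power2_eq_square algebra_simps)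
    moreover have "0 \<le> \<bar>a\<bar>*\<bar>q\<bar>" by simp
    ultimately show ?thesis by linarith
  qed
  have a2: "a^2 \<le> a^2+q^2" "q^2 \<le> a^2+q^2" by simp_all
  have qR: "\<bar>q\<bar>*\<bar>R\<bar> \<le> K*(\<bar>a\<bar>*\<bar>q\<bar>)"
    using assms(4) mult_left_mono[OF assms(4), of "\<bar>q\<bar>"] by (simp add: algebra_simps)
  have "\<bar>2*a*(b*a - q) + 2*q*(bb*a - cc*q + R)\<bar>
     = \<bar>2*b*a^2 - 2*(a*q) + 2*bb*(a*q) - 2*cc*q^2 + 2*(q*R)\<bar>"
    by (simp add: power2_eq_square algebra_simps)
  also have "\<dots> \<le> 2*(b*a^2) + 2*(\<bar>a\<bar>*\<bar>q\<bar>) + 2*(bb*(\<bar>a\<bar>*\<bar>q\<bar>)) + 2*(\<bar>cc\<bar>*q^2) + 2*(\<bar>q\<bar>*\<bar>R\<bar>)"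
  proof -
    have tri: "\<bar>x1 - x2 + x3 - x4 + x5\<bar> \<le> \<bar>x1\<bar>+\<bar>x2\<bar>+\<bar>x3\<bar>+\<bar>x4\<bar>+\<bar>x5\<bar>" for x1 x2 x3 x4 x5 :: real
      by arith
    have "\<bar>2*b*a^2\<bar> = 2*b*a^2" "\<bar>2*(a*q)\<bar> = 2*(\<bar>a\<bar>*\<bar>q\<bar>)"
      "\<bar>2*bb*(a*q)\<bar> = 2*bb*(\<bar>a\<bar>*\<bar>q\<bar>)" "\<bar>2*cc*q^2\<bar> = 2*\<bar>cc\<bar>*q^2"
      "\<bar>2*(q*R)\<bar> = 2*(\<bar>q\<bar>*\<bar>R\<bar>)"
      using assms(1,2) by (simp_all add: abs_mult)
    thus ?thesis using tri[of "2*b*a^2" "2*(a*q)" "2*bb*(a*q)" "2*cc*q^2" "2*(q*R)"] by simp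
  qed
  also have "\<dots> \<le> 2*(b*(a^2+q^2)) + 2*(a^2+q^2) + 2*(bb*(a^2+q^2)) + 2*(\<bar>cc\<bar>*(a^2+q^2)) + 2*(K*(a^2+q^2))"
  proof -
    have lin5: "2*x1+2*x2+2*x3+2*x4+2*x5 \<le> 2*y1+2*y2+2*y3+2*y4+2*y5"
      if "x1 \<le> y1" "x2 \<le> y2" "x3 \<le> y3" "x4 \<le> y4" "x5 \<le> y5" for x1 x2 x3 x4 x5 y1 y2 y3 y4 y5 :: real
      using that by linarith
    have "\<bar>q\<bar>*\<bar>R\<bar> \<le> K*(a^2+q^2)" using qR mult_left_mono[OF h1 assms(3)] by linarith
    thus ?thesis using h1 mult_left_mono[OF h1 assms(2)]
      mult_left_mono[OF a2(1) assms(1)] mult_left_mono[OF a2(2) abs_ge_zero[of cc]]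
      by (intro lin5)
  qed
  also have "\<dots> = 2*(b + \<bar>cc\<bar> + 1 + bb + K)*(a^2+q^2)" by (simp add: algebra_simps)
  finally show ?thesis .
qed

lemma A_zero_before:
  assumes c: "c > 0" "A c = 0" "Q c = 0" and e: "0 < e" "e < c"
  shows "A e = 0"
proof -
  have cw: "continuous_on {e..c} w" using contw e by (intro continuous_at_imp_continuous_on) auto
  have cS: "continuous_on {e..c} S" using contS e by (intro continuous_at_imp_continuous_on) auto
  have "continuous_on {e..c} (\<lambda>t. min (w t) (S t))" using cw cS by (intro continuous_intros)
  then obtain t0 where t0: "t0 \<in> {e..c}" "\<forall>y\<in>{e..c}. min (w t0) (S t0) \<le> min (w y) (S y)"
    using continuous_attains_inf[of "{e..c}" "\<lambda>t. min (w t) (S t)"] e by auto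
  define m where "m = min (w t0) (S t0)"
  have mpos: "m > 0" using t0 e w_pos S_pos by (simp add: m_def)
  have mw: "m \<le> w t" and mS: "m \<le> S t" if "t \<in> {e..c}" for t using t0 that by (auto simp: m_def)
  define K where "K = c powr (\<alpha>+2) * (p * m powr (-p-1))"
  have Kpos: "K \<ge> 0" using p by (simp add: K_def)
  have R: "\<bar>bb * S t - F t\<bar> \<le> K * \<bar>A t\<bar>" if t: "t \<in> {e..c}" for t
  proof -
    have tp: "t > 0" using t e by auto
    have "bb * S t - F t = t powr (\<alpha>+2) * (S t powr (-p) - w t powr (-p))"
      using S_id[OF tp] by (simp add: F_def algebra_simps)
    hence "\<bar>bb * S t - F t\<bar> = t powr (\<alpha>+2) * \<bar>S t powr (-p) - w t powr (-p)\<bar>"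
      by (simp add: abs_mult)
    also have "\<dots> \<le> c powr (\<alpha>+2) * (p * m powr (-p-1) * \<bar>S t - w t\<bar>)"
    proof (rule mult_mono)
      show "t powr (\<alpha>+2) \<le> c powr (\<alpha>+2)" using t e alpha by (intro powr_mono2) auto
      show "\<bar>S t powr (-p) - w t powr (-p)\<bar> \<le> p * m powr (-p-1) * \<bar>S t - w t\<bar>"
        using lip_powr_neg[OF mpos mS[OF t] mw[OF t]] p by simp
    qed (auto)
    also have "\<dots> = K * \<bar>A t\<bar>" by (simp add: K_def A_def abs_minus_commute)
    finally show ?thesis .
  qed
  define cc where "cc = \<beta> + real n - 2"
  define C where "C = \<beta> + \<bar>cc\<bar> + 1 + bb + K"
  define M where "M = 2 * C / e"
  define E where "E t = A t * A t + Q t * Q t" for t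
  define Gr where "Gr t = exp (M * t) * E t" for t
  have Cpos: "C \<ge> 0" using beta_pos bb_pos Kpos by (simp add: C_def)
  have dE: "(E has_real_derivative 2 * A t * (w' t - \<beta> * S t / t) + 2 * Q t * ((\<beta> - 1) * w' t - t * w'' t)) (at t)"
    if "t > 0" for t
  proof -
    have "(E has_real_derivative ((w' t - \<beta> * S t / t) * A t + A t * (w' t - \<beta> * S t / t))
        + (((\<beta> - 1) * w' t - t * w'' t) * Q t + Q t * ((\<beta> - 1) * w' t - t * w'' t))) (at t)"
      unfolding E_def[abs_def] using DERIV_add[OF DERIV_mult[OF dA[OF that] dA[OF that]] DERIV_mult[OF dQ[OF that] dQ[OF that]]]
      by (simp add: algebra_simps)
    thus ?thesis by (simp add: algebra_simps)
  qed
  have Ebound: "2 * A t * (w' t - \<beta> * S t / t) + 2 * Q t * ((\<beta> - 1) * w' t - t * w'' t) \<ge> - M * E t"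
    if t: "t \<in> {e..c}" for t
  proof -
    have tp: "t > 0" using t e by auto
    define D where "D = 2 * A t * (w' t - \<beta> * S t / t) + 2 * Q t * ((\<beta> - 1) * w' t - t * w'' t)"
    have "t * D = 2 * A t * (\<beta> * A t - Q t) + 2 * Q t * (bb * A t - cc * Q t + (bb * S t - F t))"
    proof -
      have "t * D = 2 * A t * (t * (w' t - \<beta> * S t / t)) + 2 * Q t * (t * ((\<beta> - 1) * w' t - t * w'' t))"
        by (simp add: D_def algebra_simps)
      also have "\<dots> = 2 * A t * (\<beta> * A t - Q t) + 2 * Q t * (bb * w t - (\<beta> + real n - 2) * Q t - F t)"
        using tdA[OF tp] tdQ[OF tp] by simp
      also have "bb * w t = bb * A t + bb * S t" by (simp add: A_def algebra_simps)
      finally show ?thesis by (simp add: cc_def algebra_simps)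
    qed
    hence "\<bar>t * D\<bar> \<le> 2 * C * (A t ^2 + Q t ^2)"
      using bound_alg[of \<beta> bb K "bb * S t - F t" "A t" "Q t" cc] beta_pos bb_pos Kpos R[OF t]
      by (simp add: C_def)
    hence "t * \<bar>D\<bar> \<le> 2 * C * E t" using tp by (simp add: E_def abs_mult power2_eq_square)
    moreover have "e * \<bar>D\<bar> \<le> t * \<bar>D\<bar>" using t by (intro mult_right_mono) auto
    ultimately have "e * \<bar>D\<bar> \<le> 2 * C * E t" by linarith
    hence "\<bar>D\<bar> \<le> M * E t" using e by (simp add: M_def field_simps)
    thus ?thesis unfolding D_def[symmetric] by linarith
  qed
  have "Gr e \<le> Gr c"
  proof (rule DERIV_nonneg_imp_nondecreasing[of e c Gr])
    fix t assume "e \<le> t" "t \<le> c"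
    hence t: "t \<in> {e..c}" and tp: "t > 0" using e by auto
    let ?D = "2 * A t * (w' t - \<beta> * S t / t) + 2 * Q t * ((\<beta> - 1) * w' t - t * w'' t)"
    have "(Gr has_real_derivative (exp (M * t) * M) * E t + exp (M * t) * ?D) (at t)"
    proof -
      have dx: "((\<lambda>t. exp (M * t)) has_real_derivative exp (M * t) * M) (at t)"
        by (auto intro!: derivative_eq_intros)
      show ?thesis unfolding Gr_def[abs_def] using DERIV_mult[OF dx dE[OF tp]] by (simp add: algebra_simps)
    qed
    moreover have "(exp (M * t) * M) * E t + exp (M * t) * ?D \<ge> 0"
    proof -
      have "M * E t + ?D \<ge> 0" using Ebound[OF t] by linarith
      hence "exp (M * t) * (M * E t + ?D) \<ge> 0" by simp
      thus ?thesis by (simp add: algebra_simps)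
    qed
    ultimately show "\<exists>y. (Gr has_real_derivative y) (at t) \<and> y \<ge> 0" by blast
  qed (use e in auto)
  moreover have "Gr c = 0" using c by (simp add: Gr_def E_def)
  ultimately have "exp (M * e) * E e \<le> 0" by (simp add: Gr_def)
  hence "E e \<le> 0" by (simp add: mult_le_0_iff)
  moreover have "A e * A e \<ge> 0" "Q e * Q e \<ge> 0" by simp_all
  ultimately have "A e * A e = 0" unfolding E_def by linarith
  thus ?thesis by simp
qed

lemma no_eq: assumes "c > 0" "A c = 0" "Q c = 0" shows False
proof -
  have e1: "\<forall>\<^sub>F t in at_right 0. w t > 1/2" using order_tendstoD(1)[OF w_lim, of "1/2"] by simp
  have e2: "\<forall>\<^sub>F t in at_right 0. S t < 1/2" using order_tendstoD(2)[OF S_lim, of "1/2"] by simp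
  have e3: "\<forall>\<^sub>F t in at_right 0. t < c \<and> t > 0" unfolding eventually_at_right_field
    using assms(1) by auto
  have ev: "\<forall>\<^sub>F t in at_right 0. w t > 1/2 \<and> S t < 1/2 \<and> t < c \<and> t > 0"
    using e1 e2 e3 by (auto intro: eventually_conj)
  then obtain e where "w e > 1/2" "S e < 1/2" "e < c" "e > 0"
    using eventually_happens'[OF trivial_limit_at_right_real ev] by auto
  moreover have "A e = 0" using A_zero_before[OF assms] \<open>e < c\<close> \<open>e > 0\<close> by simp
  ultimately show False by (simp add: A_def)
qed

lemma contA: "t > 0 \<Longrightarrow> isCont A t" using dA DERIV_isCont by blast
lemma contQ: "t > 0 \<Longrightarrow> isCont Q t" using dQ DERIV_isCont by blast

lemma zero_down:
  assumes "0 < x" "x < y" "Q x > 0" "Q y < 0"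
  shows "\<exists>c. x < c \<and> c < y \<and> Q c = 0 \<and> A c < 0"
proof -
  have "continuous_on {x..y} Q" using contQ assms by (intro continuous_at_imp_continuous_on) auto
  then obtain c where c: "x < c" "c \<le> y" "Q c = 0" "\<forall>s. x \<le> s \<and> s < c \<longrightarrow> Q s > 0"
    using first_zero[of x y Q] assms by auto
  have cy: "c < y" using c assms by (cases "c = y") auto
  have cp: "c > 0" using c assms by auto
  have "(\<beta> - 1) * w' c - c * w'' c \<le> 0"
    by (rule deriv_sign_left[OF dQ[OF cp] c(3), of "c - x"]) (use c in auto)
  hence "c * ((\<beta> - 1) * w' c - c * w'' c) \<le> 0" using cp by (simp add: mult_nonneg_nonpos)
  hence "bb * w c - F c \<le> 0" using tdQ[OF cp] c(3) by simp
  hence "\<not> A c > 0" using Qzero_sign(1)[OF cp c(3)] by linarith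
  moreover have "A c \<noteq> 0" using no_eq[OF cp _ c(3)] by auto
  ultimately show ?thesis using c cy by force
qed

lemma zero_up:
  assumes "0 < x" "x < y" "Q x < 0" "Q y > 0"
  shows "\<exists>c. x < c \<and> c < y \<and> Q c = 0 \<and> A c > 0"
proof -
  have "continuous_on {x..y} Q" using contQ assms by (intro continuous_at_imp_continuous_on) auto
  then obtain c where c: "x \<le> c" "c < y" "Q c = 0" "\<forall>s. c < s \<and> s \<le> y \<longrightarrow> Q s > 0"
    using last_zero[of x y Q] assms by auto
  have cx: "x < c" using c assms by (cases "c = x") auto
  have cp: "c > 0" using cx assms by auto
  have "(\<beta> - 1) * w' c - c * w'' c \<ge> 0"
    by (rule deriv_sign_right[OF dQ[OF cp] c(3), of "y - c"]) (use c in auto)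
  hence "c * ((\<beta> - 1) * w' c - c * w'' c) \<ge> 0" using cp by simp
  hence "bb * w c - F c \<ge> 0" using tdQ[OF cp] c(3) by simp
  hence "\<not> A c < 0" using Qzero_sign(2)[OF cp c(3)] by linarith
  moreover have "A c \<noteq> 0" using no_eq[OF cp _ c(3)] by auto
  ultimately show ?thesis using c cx by force
qed

lemma H_eq: "H t = (kk + \<beta>) * A t - Q t" by (simp add: H_def A_def Q_def algebra_simps)

lemma three_A:
  assumes "0 < e1" "e1 < e2" "e2 < e3" "A e1 < 0" "A e2 > 0" "A e3 < 0"
  shows False
proof -
  have "continuous_on {e1..e2} A" using contA assms by (intro continuous_at_imp_continuous_on) auto
  then obtain d1 where d1: "e1 \<le> d1" "d1 < e2" "A d1 = 0" "\<forall>s. d1 < s \<and> s \<le> e2 \<longrightarrow> A s > 0"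
    using last_zero[of e1 e2 A] assms by auto
  have "continuous_on {e2..e3} A" using contA assms by (intro continuous_at_imp_continuous_on) auto
  then obtain d2 where d2: "e2 < d2" "d2 \<le> e3" "A d2 = 0" "\<forall>s. e2 \<le> s \<and> s < d2 \<longrightarrow> A s > 0"
    using first_zero[of e2 e3 A] assms by auto
  have d1p: "d1 > 0" using d1 assms by auto
  have d2p: "d2 > 0" using d2 assms by auto
  have Apos: "A s \<ge> 0" if "d1 \<le> s" "s \<le> d2" for s
  proof (cases "s \<le> e2")
    case True
    show ?thesis
    proof (cases "s = d1")
      case False
      hence "d1 < s" using that by simp
      thus ?thesis using d1(4) True by (simp add: less_imp_le)
    qed (use d1 in simp)
  next
    case False
    show ?thesis
    proof (cases "s = d2")
      case F2: False
      hence "s < d2" using that by simp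
      thus ?thesis using d2(4) False by (simp add: less_imp_le)
    qed (use d2 in simp)
  qed
  have "w' d1 - \<beta> * S d1 / d1 \<ge> 0"
    by (rule deriv_sign_right[OF dA[OF d1p] d1(3), of "e2 - d1"]) (use d1 in auto)
  hence "\<beta> * A d1 - Q d1 \<ge> 0" using tdA[OF d1p] d1p by (metis mult_nonneg_nonneg less_eq_real_def)
  hence Q1: "Q d1 \<le> 0" using d1 by simp
  have "w' d2 - \<beta> * S d2 / d2 \<le> 0"
    by (rule deriv_sign_left[OF dA[OF d2p] d2(3), of "d2 - e2"]) (use d2 in auto)
  hence "d2 * (w' d2 - \<beta> * S d2 / d2) \<le> 0" using d2p by (simp add: mult_nonneg_nonpos)
  hence "\<beta> * A d2 - Q d2 \<le> 0" using tdA[OF d2p] by simp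
  hence Q2: "Q d2 \<ge> 0" using d2 by simp
  have "Y d1 \<le> Y d2"
  proof (rule DERIV_nonneg_imp_nondecreasing[of d1 d2 Y])
    show "d1 \<le> d2" using d1 d2 by simp
    fix t assume t: "d1 \<le> t" "t \<le> d2"
    hence tp: "t > 0" using d1p by simp
    have "G t \<ge> 0" using G_nonneg[OF tp Apos[OF t]] .
    hence "t powr (kk - 1) * G t \<ge> 0" by simp
    thus "\<exists>y. (Y has_real_derivative y) (at t) \<and> y \<ge> 0" using dY[OF tp] by blast
  qed
  moreover have "Y d1 = - (d1 powr kk * Q d1)" using d1 by (simp add: Y_def H_eq)
  moreover have "Y d2 = - (d2 powr kk * Q d2)" using d2 by (simp add: Y_def H_eq)
  moreover have "d1 powr kk * Q d1 \<le> 0" using Q1 by (simp add: mult_nonneg_nonpos)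
  moreover have "d2 powr kk * Q d2 \<ge> 0" using Q2 by simp
  ultimately have "d1 powr kk * Q d1 = 0" by linarith
  hence "Q d1 = 0" using d1p by simp
  thus False using no_eq[OF d1p d1(3)] by simp
qed

definition "P t = (p+1) * t powr (\<alpha>+1) * w t powr p / (w t powr (p+1))^2"

lemma P_pos: "t > 0 \<Longrightarrow> P t > 0" using p w_pos[of t] by (simp add: P_def)

lemma dlam: assumes "t > 0" shows "(mems_lambda w \<alpha> p has_real_derivative P t * Q t) (at t)"
proof -
  have wp: "w t > 0" using w_pos assms by simp
  have d1: "((\<lambda>t. t powr (\<alpha>+2)) has_real_derivative (\<alpha>+2) * t powr (\<alpha>+2-1)) (at t)"
    using has_real_derivative_powr[OF assms] .
  have d2: "((\<lambda>t. w t powr (p+1)) has_real_derivative (p+1) * w t powr (p+1 - of_nat 1) * w' t) (at t)"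
    using DERIV_fun_powr[OF dw[OF assms] wp] .
  have "(mems_lambda w \<alpha> p has_real_derivative
      ((\<alpha> + 2) * t powr (1 + \<alpha>) * w t powr (p + 1) - t powr (\<alpha> + 2) * ((p + 1) * w t powr p * w' t))
      / (w t powr (p + 1) * w t powr (p + 1))) (at t)"
    unfolding mems_lambda_def[abs_def] using DERIV_divide[OF d1 d2] wp by simp
  moreover have "((\<alpha> + 2) * t powr (1 + \<alpha>) * w t powr (p + 1) - t powr (\<alpha> + 2) * ((p + 1) * w t powr p * w' t))
      / (w t powr (p + 1) * w t powr (p + 1)) = P t * Q t"
  proof -
    have a: "\<alpha>+2 = \<beta> * (p+1)" using beta_p by simp
    have e1: "w t powr (p+1) = w t powr p * w t" using wp by (simp add: powr_add)
    have e2: "t powr (\<alpha>+2) = t powr (1+\<alpha>) * t"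
    proof -
      have "t powr (\<alpha>+2) = t powr ((1+\<alpha>) + 1)" by (simp add: algebra_simps)
      also have "\<dots> = t powr (1+\<alpha>) * t powr 1" by (rule powr_add)
      finally show ?thesis using assms by simp
    qed
    have "(\<alpha> + 2) * t powr (1 + \<alpha>) * w t powr (p + 1) - t powr (\<alpha> + 2) * ((p + 1) * w t powr p * w' t)
        = (p+1) * t powr (1+\<alpha>) * w t powr p * Q t"
      unfolding e1 e2 Q_def by (simp add: a algebra_simps)
    thus ?thesis by (simp add: P_def power2_eq_square add.commute)
  qed
  ultimately show ?thesis by simp
qed

lemma lam_lim: "(mems_lambda w \<alpha> p \<longlongrightarrow> 0) (at_right 0)"
proof -
  have "((\<lambda>t. t powr (\<alpha>+2)) \<longlongrightarrow> 0) (at_right 0)"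
    using alpha eventually_at_right_less[of "0::real"]
    by (intro tendsto_zero_powrI tendsto_ident_at tendsto_const) (auto elim: eventually_mono)
  moreover have "((\<lambda>t. w t powr (p+1)) \<longlongrightarrow> 1 powr (p+1)) (at_right 0)"
    using w_lim by (intro tendsto_powr') auto
  ultimately have "((\<lambda>t. t powr (\<alpha>+2) / w t powr (p+1)) \<longlongrightarrow> 0 / 1 powr (p+1)) (at_right 0)"
    by (intro tendsto_divide) auto
  thus ?thesis by (simp add: mems_lambda_def[abs_def])
qed

lemma Q_pos_before: assumes "t1 > 0" shows "\<exists>s. 0 < s \<and> s < t1 \<and> Q s > 0"
proof -
  let ?L = "mems_lambda w \<alpha> p"
  have Lp: "?L t1 > 0" using assms w_pos[of t1] by (simp add: mems_lambda_def)
  have e1: "\<forall>\<^sub>F t in at_right 0. ?L t < ?L t1" using order_tendstoD(2)[OF lam_lim Lp] .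
  have e3: "\<forall>\<^sub>F t in at_right 0. t < t1 \<and> t > 0" unfolding eventually_at_right_field
    using assms by auto
  obtain e where e: "?L e < ?L t1" "e < t1" "e > 0"
    using eventually_happens'[OF trivial_limit_at_right_real eventually_conj[OF e1 e3]] by auto
  have "continuous_on {e..t1} ?L"
  proof (intro continuous_at_imp_continuous_on ballI)
    fix x assume "x \<in> {e..t1}"
    hence "x > 0" using e by auto
    thus "isCont ?L x" using DERIV_isCont[OF dlam] by blast
  qed
  moreover have "?L differentiable (at z)" if "e < z" for z
    using dlam[of z] that e real_differentiable_def by force
  ultimately obtain l z where z: "e < z" "z < t1" "DERIV ?L z :> l" "?L t1 - ?L e = (t1 - e) * l"
    using MVT[of e t1 ?L] e by blast
  have zp: "z > 0" using z e by simp
  have "l = P z * Q z" using DERIV_unique[OF z(3) dlam[OF zp]] .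
  moreover have "(t1 - e) * l > 0" using z(4) e by simp
  hence "l > 0" using e by (simp add: zero_less_mult_iff)
  ultimately have "Q z > 0" using P_pos[OF zp] by (simp add: zero_less_mult_iff)
  thus ?thesis using z zp by auto
qed

lemma main: "at_most_two_sign_changes (\<lambda>t. deriv (mems_lambda w \<alpha> p) t) {0<..}"
  unfolding at_most_two_sign_changes_def
proof (clarify)
  fix t1 t2 t3 t4 :: real
  assume t: "t1 > 0" "t2 > 0" "t3 > 0" "t4 > 0" "t1 < t2" "t2 < t3" "t3 < t4"
    and s1: "deriv (mems_lambda w \<alpha> p) t1 * deriv (mems_lambda w \<alpha> p) t2 < 0"
    and s2: "deriv (mems_lambda w \<alpha> p) t2 * deriv (mems_lambda w \<alpha> p) t3 < 0"
    and s3: "deriv (mems_lambda w \<alpha> p) t3 * deriv (mems_lambda w \<alpha> p) t4 < 0"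
  have dv: "deriv (mems_lambda w \<alpha> p) x = P x * Q x" if "x > 0" for x
    using DERIV_imp_deriv[OF dlam[OF that]] .
  have red: "Q x * Q y < 0" if "x > 0" "y > 0" "(P x * Q x) * (P y * Q y) < 0" for x y
  proof -
    have "(P x * P y) * (Q x * Q y) < 0" using that(3) by (simp add: algebra_simps)
    moreover have "P x * P y > 0" using P_pos that by simp
    ultimately show ?thesis by (metis mult_nonneg_nonneg less_imp_le not_less)
  qed
  have q1: "Q t1 * Q t2 < 0" using red[of t1 t2] s1 t dv by simp
  have q2: "Q t2 * Q t3 < 0" using red[of t2 t3] s2 t dv by simp
  have q3: "Q t3 * Q t4 < 0" using red[of t3 t4] s3 t dv by simp
  show False
  proof (cases "Q t1 > 0")
    case True
    hence "Q t2 < 0" using q1 by (simp add: mult_less_0_iff)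
    hence "Q t3 > 0" using q2 by (simp add: mult_less_0_iff)
    hence "Q t4 < 0" using q3 by (simp add: mult_less_0_iff)
    obtain c1 where c1: "t1 < c1" "c1 < t2" "A c1 < 0" using zero_down[of t1 t2] t True \<open>Q t2 < 0\<close> by auto
    obtain c2 where c2: "t2 < c2" "c2 < t3" "A c2 > 0" using zero_up[of t2 t3] t \<open>Q t2 < 0\<close> \<open>Q t3 > 0\<close> by auto
    obtain c3 where c3: "t3 < c3" "c3 < t4" "A c3 < 0" using zero_down[of t3 t4] t \<open>Q t3 > 0\<close> \<open>Q t4 < 0\<close> by auto
    show False using three_A[of c1 c2 c3] c1 c2 c3 t by simp
  next
    case False
    hence "Q t1 < 0" using q1 by (cases "Q t1 = 0") auto
    hence "Q t2 > 0" using q1 by (simp add: mult_less_0_iff)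
    hence "Q t3 < 0" using q2 by (simp add: mult_less_0_iff)
    obtain s0 where s0: "0 < s0" "s0 < t1" "Q s0 > 0" using Q_pos_before[OF t(1)] by auto
    obtain c1 where c1: "s0 < c1" "c1 < t1" "A c1 < 0" using zero_down[of s0 t1] s0 \<open>Q t1 < 0\<close> by auto
    obtain c2 where c2: "t1 < c2" "c2 < t2" "A c2 > 0" using zero_up[of t1 t2] t \<open>Q t1 < 0\<close> \<open>Q t2 > 0\<close> by auto
    obtain c3 where c3: "t2 < c3" "c3 < t3" "A c3 < 0" using zero_down[of t2 t3] t \<open>Q t2 > 0\<close> \<open>Q t3 < 0\<close> by auto
    show False using three_A[of c1 c2 c3] c1 c2 c3 s0 by simp
  qed
qed

end

theorem theorem4p2:
  fixes \<alpha> p :: real and n :: nat and w w' w'' :: "real \<Rightarrow> real"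
  assumes alpha: "\<alpha> \<ge> 0" and p: "p > 1"
    and n: "real n \<ge> 2 + 2 * (\<alpha> + 2) / (p + 1) * (p + sqrt (p^2 + p))"
    and w_pos: "\<And>t. t \<ge> 0 \<Longrightarrow> w t > 0"
    and w_deriv: "\<And>t. t \<ge> 0 \<Longrightarrow> (w has_real_derivative w' t) (at t within {0..})"
    and w'_deriv: "\<And>t. t > 0 \<Longrightarrow> (w' has_real_derivative w'' t) (at t)"
    and w_ode: "\<And>t. t > 0 \<Longrightarrow> w'' t + (real n - 1) / t * w' t = t powr \<alpha> / (w t) powr p"
    and w0: "w 0 = 1" and w'0: "w' 0 = 0"
  shows "at_most_two_sign_changes (\<lambda>t. deriv (mems_lambda w \<alpha> p) t) {0<..}"
proof -
  interpret mems \<alpha> p n w w' w''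
    using alpha p n w_pos w_deriv w'_deriv w_ode w0 w'0 by unfold_locales
  show ?thesis by (rule main)
qed

end
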